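(* The invariant $\bar\gamma_2$ is a finite type invariant of degree one, in the following sense: if $K$ is an oriented virtual knot diagram and $K'$ is obtained from $K$ by switching exactly one classical crossing, then $\bar\gamma_2(K)=(-1)^1\bar\gamma_2(K')$, i.e. (coefficients being modulo $2$) $\bar\gamma_2(K)=\bar\gamma_2(K')$.
   Context: For an oriented virtual knot diagram $K$ and a classical crossing $c$ with sign $sgn(c)\in\{\pm1\}$, let $K_c$ be the two-component oriented virtual link diagram obtained by smoothing $c$ in the orientation-respecting way. Let $L(K_c)$ be the sum of the signs of all classical crossings of $K_c$ at which the two strands belong to different components, and $\bar L(K_c)=L(K_c)\bmod 2$. Define $\gamma(K)=\sum_{c} t^{\bar L(K_c)}\,sgn(c)$, summing over all classical crossings. In the chord (Gauss) diagram of $K$, each classical crossing is a chord; a chord has odd parity if it intersects an odd number of other chords, and even parity otherwise. Let $P$ be the set of unordered pairs $p$ of intersecting chords of opposite parity, and for $p\in P$ let $K_p$ be the diagram obtained by smoothing both crossings of $p$ in the orientation-respecting way. Define $\bar\gamma_2(K)=\sum_{p\in P}t^2\gamma(K_p)$ with coefficients reduced modulo $2$. The paper's notion of degree: for a set $S$ of classical crossings of a diagram $D$, $D_S$ denotes $D$ with all crossings in $S$ switched; an invariant $v$ has degree $n$ if $v(D)=(-1)^{|S|}v(D_S)$ whenever $|S|=n$. *)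

theory Defs
  imports "HOL-Computational_Algebra.Polynomial"
begin

text \<open>An oriented virtual knot diagram is encoded by its Gauss (chord) diagram:
  a word listing, in order along the oriented knot starting at some base point,
  the passages through classical crossings as pairs (crossing label, passing over?),
  together with a sign function on the crossing labels.  Every chord diagram with
  these data is realized by a virtual knot diagram.\<close>

type_synonym gauss_diagram = "(nat \<times> bool) list \<times> (nat \<Rightarrow> int)"

definition chords :: "(nat \<times> bool) list \<Rightarrow> nat set" where
  "chords w = fst ` set w"

definition occ :: "(nat \<times> bool) list \<Rightarrow> nat \<Rightarrow> nat set" where
  "occ w c = {i. i < length w \<and> fst (w ! i) = c}"

definition wf_gauss :: "gauss_diagram \<Rightarrow> bool" where
  "wf_gauss K \<longleftrightarrow> (\<forall>c \<in> chords (fst K).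
      card {i. i < length (fst K) \<and> fst K ! i = (c, True)} = 1 \<and>
      card {i. i < length (fst K) \<and> fst K ! i = (c, False)} = 1 \<and>
      (snd K c = 1 \<or> snd K c = -1))"

definition fstpos :: "(nat \<times> bool) list \<Rightarrow> nat \<Rightarrow> nat" where
  "fstpos w c = Min (occ w c)"

definition sndpos :: "(nat \<times> bool) list \<Rightarrow> nat \<Rightarrow> nat" where
  "sndpos w c = Max (occ w c)"

text \<open>Position i lies on the component of K_c formed by the arc strictly between
  the two passages through c.\<close>
definition inside :: "(nat \<times> bool) list \<Rightarrow> nat \<Rightarrow> nat \<Rightarrow> bool" where
  "inside w c i \<longleftrightarrow> fstpos w c < i \<and> i < sndpos w c"

text \<open>Crossing d of K_c has its two strands on different components.\<close>
definition inter_comp :: "(nat \<times> bool) list \<Rightarrow> nat \<Rightarrow> nat \<Rightarrow> bool" where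
  "inter_comp w c d \<longleftrightarrow> inside w c (fstpos w d) \<noteq> inside w c (sndpos w d)"

definition link_smooth :: "gauss_diagram \<Rightarrow> nat \<Rightarrow> int" where
  "link_smooth K c = (\<Sum>d \<in> {d \<in> chords (fst K) - {c}. inter_comp (fst K) c d}. snd K d)"

definition gamma :: "gauss_diagram \<Rightarrow> int poly" where
  "gamma K = (\<Sum>c \<in> chords (fst K). monom (snd K c) (nat (link_smooth K c mod 2)))"

definition intersect :: "(nat \<times> bool) list \<Rightarrow> nat \<Rightarrow> nat \<Rightarrow> bool" where
  "intersect w c d \<longleftrightarrow> c \<in> chords w \<and> d \<in> chords w \<and> c \<noteq> d \<and>
     inside w c (fstpos w d) \<noteq> inside w c (sndpos w d)"

definition odd_chord :: "(nat \<times> bool) list \<Rightarrow> nat \<Rightarrow> bool" where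
  "odd_chord w c \<longleftrightarrow> odd (card {d. intersect w c d})"

definition opp_pairs :: "(nat \<times> bool) list \<Rightarrow> nat set set" where
  "opp_pairs w = {{c, d} | c d. intersect w c d \<and> odd_chord w c \<noteq> odd_chord w d}"

definition seg :: "'a list \<Rightarrow> nat \<Rightarrow> nat \<Rightarrow> 'a list" where
  "seg w i j = take (j - i) (drop i w)"

text \<open>Orientation-respecting smoothing of two intersecting chords.  If the four
  endpoints are at positions p<q<r<s (p,r one chord, q,s the other) and the word
  is X0 p A q B r C s X1, the resulting knot reads A (X1 X0) C B cyclically.\<close>
definition smooth_pair_word :: "(nat \<times> bool) list \<Rightarrow> nat set \<Rightarrow> (nat \<times> bool) list" where
  "smooth_pair_word w S = (let ps = sorted_list_of_set (\<Union>c \<in> S. occ w c);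
       p = ps ! 0; q = ps ! 1; r = ps ! 2; s = ps ! 3 in
     seg w (p+1) q @ seg w (s+1) (length w) @ seg w 0 p @ seg w (r+1) s @ seg w (q+1) r)"

definition smooth_pair :: "gauss_diagram \<Rightarrow> nat set \<Rightarrow> gauss_diagram" where
  "smooth_pair K S = (smooth_pair_word (fst K) S, snd K)"

definition mod2_poly :: "int poly \<Rightarrow> int poly" where
  "mod2_poly f = map_poly (\<lambda>x. x mod 2) f"

definition gamma2bar :: "gauss_diagram \<Rightarrow> int poly" where
  "gamma2bar K = mod2_poly (\<Sum>p \<in> opp_pairs (fst K). monom 1 2 * gamma (smooth_pair K p))"

definition switch :: "gauss_diagram \<Rightarrow> nat \<Rightarrow> gauss_diagram" where
  "switch K c = (map (\<lambda>(a, b). if a = c then (a, \<not> b) else (a, b)) (fst K),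
                 (snd K)(c := - snd K c))"

end

theory Submission
  imports Defs
begin

definition cong2 :: "int poly \<Rightarrow> int poly \<Rightarrow> bool" where
  "cong2 f g \<longleftrightarrow> (\<exists>h. f - g = smult 2 h)"

lemma smult_sum_right: "smult c (sum f A) = (\<Sum>x\<in>A. smult c (f x))"
  by (induction A rule: infinite_finite_induct) (simp_all add: smult_add_right)

lemma cong2_sum:
  assumes "\<And>x. x \<in> A \<Longrightarrow> cong2 (f x) (g x)"
  shows "cong2 (sum f A) (sum g A)"
proof -
  define H where "H x = (SOME h. f x - g x = smult 2 h)" for x
  have "\<And>x. x \<in> A \<Longrightarrow> f x - g x = smult 2 (H x)"
    using assms unfolding cong2_def H_def by (metis (mono_tags) someI_ex)
  then have "sum f A - sum g A = smult 2 (sum H A)"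
    by (simp add: sum_subtractf[symmetric] smult_sum_right)
  then show ?thesis unfolding cong2_def by blast
qed

lemma cong2_mult: "cong2 f g \<Longrightarrow> cong2 (m * f) (m * g)"
  unfolding cong2_def by (metis right_diff_distrib mult_smult_right)

lemma mod2_poly_cong2:
  assumes "cong2 f g" shows "mod2_poly f = mod2_poly g"
proof -
  obtain h where h: "f - g = smult 2 h" using assms cong2_def by blast
  have "coeff f n = coeff g n + 2 * coeff h n" for n
    using arg_cong[OF h, of "\<lambda>p. coeff p n"] by simp
  then show ?thesis unfolding mod2_poly_def
    by (intro poly_eqI) (simp add: coeff_map_poly)
qed

lemma mod2_poly_idem: "mod2_poly (mod2_poly f) = mod2_poly f"
  unfolding mod2_poly_def by (intro poly_eqI) (simp add: coeff_map_poly)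

lemma mod2_poly_neg: "mod2_poly (- f) = mod2_poly f"
proof -
  have "cong2 (- f) f" unfolding cong2_def
  proof (rule exI[of _ "- f"])
    show "- f - f = smult 2 (- f)"
    proof -
      have "smult 2 (-f) = smult 1 (-f) + smult 1 (-f)"
        by (simp only: smult_add_left[symmetric] one_add_one)
      then show ?thesis by simp
    qed
  qed
  then show ?thesis by (rule mod2_poly_cong2)
qed

lemma chords_map: "chords w = set (map fst w)"
  unfolding chords_def by simp

lemma occ_map: "occ w c = {i. i < length (map fst w) \<and> map fst w ! i = c}"
  unfolding occ_def by auto

lemma occ_eq: "map fst w1 = map fst w2 \<Longrightarrow> occ w1 = occ w2"
  by (rule ext) (simp only: occ_map)

lemma seg_map: "map fst (seg w i j) = seg (map fst w) i j"
  unfolding seg_def by (simp add: take_map drop_map)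

lemma smooth_map:
  assumes "map fst w1 = map fst w2"
  shows "map fst (smooth_pair_word w1 S) = map fst (smooth_pair_word w2 S)"
proof -
  have o: "occ w1 = occ w2" using assms by (rule occ_eq)
  have l: "length w1 = length w2" using assms by (metis length_map)
  show ?thesis unfolding smooth_pair_word_def Let_def o l
    by (simp add: seg_map assms)
qed

lemma opp_map:
  assumes "map fst w1 = map fst w2"
  shows "opp_pairs w1 = opp_pairs w2"
proof -
  have o: "occ w1 = occ w2" using assms by (rule occ_eq)
  have c: "chords w1 = chords w2" using assms by (simp add: chords_map)
  have i: "intersect w1 = intersect w2"
    unfolding intersect_def[abs_def] inside_def fstpos_def sndpos_def o c ..
  show ?thesis unfolding opp_pairs_def odd_chord_def i ..
qed

lemma gamma_cong2:
  assumes m: "map fst w1 = map fst w2" and s: "\<And>x. s1 x mod 2 = s2 x mod 2"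
  shows "cong2 (gamma (w1, s1)) (gamma (w2, s2))"
proof -
  have o: "occ w1 = occ w2" using m by (rule occ_eq)
  have c: "chords w1 = chords w2" using m by (simp add: chords_map)
  have ic: "inter_comp w1 = inter_comp w2"
    unfolding inter_comp_def[abs_def] inside_def fstpos_def sndpos_def o ..
  have L: "link_smooth (w1, s1) d mod 2 = link_smooth (w2, s2) d mod 2" for d
  proof -
    let ?A = "{d' \<in> chords w2 - {d}. inter_comp w2 d d'}"
    have "sum s1 ?A mod 2 = (\<Sum>x\<in>?A. s1 x mod 2) mod 2" by (simp add: mod_sum_eq)
    also have "\<dots> = (\<Sum>x\<in>?A. s2 x mod 2) mod 2" using s by simp
    also have "\<dots> = sum s2 ?A mod 2" by (simp add: mod_sum_eq)
    finally show ?thesis unfolding link_smooth_def fst_conv snd_conv c ic by simp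
  qed
  show ?thesis unfolding gamma_def
  proof (simp add: c, rule cong2_sum)
    fix d
    have e: "s1 d - s2 d = 2 * ((s1 d - s2 d) div 2)"
      using s[of d] by (metis dvd_mult_div_cancel mod_eq_dvd_iff)
    show "cong2 (monom (s1 d) (nat (link_smooth (w1, s1) d mod 2)))
                (monom (s2 d) (nat (link_smooth (w2, s2) d mod 2)))"
      unfolding cong2_def L diff_monom
      by (rule exI[of _ "monom ((s1 d - s2 d) div 2) (nat (link_smooth (w2, s2) d mod 2))"])
        (simp only: smult_monom e[symmetric])
  qed
qed

lemma main_eq:
  "gamma2bar K = gamma2bar (switch K c)"
proof -
  obtain w s where K: "K = (w, s)" by (cases K)
  let ?w' = "map (\<lambda>(a, b). if a = c then (a, \<not> b) else (a, b)) w"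
  let ?s' = "s(c := - s c)"
  have m: "map fst ?w' = map fst w" by (induction w) auto
  have sw: "switch (w, s) c = (?w', ?s')" unfolding switch_def by simp
  have s: "\<And>x. s x mod 2 = ?s' x mod 2" by (simp add: minus_mod_self2 zmod_zminus1_eq_if)
  have op: "opp_pairs ?w' = opp_pairs w" using opp_map[OF m] .
  show ?thesis unfolding K gamma2bar_def sw fst_conv op
  proof (rule mod2_poly_cong2, rule cong2_sum, rule cong2_mult)
    fix p
    show "cong2 (gamma (smooth_pair (w, s) p)) (gamma (smooth_pair (?w', ?s') p))"
      unfolding smooth_pair_def fst_conv snd_conv
      by (rule gamma_cong2[OF smooth_map[OF m[symmetric]] s])
  qed
qed

theorem mainTheorem7:
  fixes K :: gauss_diagram and c :: nat
  assumes "wf_gauss K" and "c \<in> chords (fst K)"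
  shows "gamma2bar K = mod2_poly (smult ((-1) ^ 1) (gamma2bar (switch K c)))
       \<and> gamma2bar K = gamma2bar (switch K c)"
proof -
  have g: "gamma2bar K = gamma2bar (switch K c)" by (rule main_eq)
  have "mod2_poly (smult ((-1) ^ 1) (gamma2bar (switch K c))) = gamma2bar (switch K c)"
    by (simp add: mod2_poly_neg gamma2bar_def mod2_poly_idem)
  then show ?thesis using g by simp
qed

end
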